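(* Let $G=(V,E,H)$ be a HEDG and $U_1,U_2\subseteq V$ disjoint subsets. Then $(G^{\mathrm{marg}\setminus U_1})^{\mathrm{marg}\setminus U_2}=G^{\mathrm{marg}\setminus(U_1\cup U_2)}=(G^{\mathrm{marg}\setminus U_2})^{\mathrm{marg}\setminus U_1}$.
   Context: A HEDG is $G=(V,E,H)$ with $V$ finite, $E\subseteq V\times V$ directed edges (self-loops allowed), $H$ a simplicial complex on $V$ (a set of subsets of $V$ containing all singletons and closed under taking subsets). Marginalization of $G$ with respect to $U\subseteq V$: $G^{\mathrm{marg}\setminus U}=(V\setminus U,E',H')$ where $v_1\to v_2\in E'$ iff $G$ has a directed path $v_1\to u_1\to\cdots\to u_r\to v_2$ with $r\ge0$ and all $u_i\in U$; and $F'\subseteq V\setminus U$ belongs to $H'$ iff there exists $F\in H$ with $F\subseteq F'\cup U$ such that every $v\in F'$ either lies in $F\setminus U$ or there is a directed path $u_1\to\cdots\to u_r\to v$ in $G$ with $r\ge1$, all $u_i\in U$ and $u_1\in F\cap U$. *)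

theory Defs
  imports Main
begin

(* A HEDG G = (V, E, H): vertices, directed edges (self-loops allowed), hyperedges. *)
type_synonym 'a hedg = "'a set \<times> ('a \<times> 'a) set \<times> 'a set set"

definition hverts :: "'a hedg \<Rightarrow> 'a set" where "hverts G = fst G"
definition hedges :: "'a hedg \<Rightarrow> ('a \<times> 'a) set" where "hedges G = fst (snd G)"
definition hhyper :: "'a hedg \<Rightarrow> 'a set set" where "hhyper G = snd (snd G)"

definition is_hedg :: "'a hedg \<Rightarrow> bool" where
  "is_hedg G \<longleftrightarrow>
     finite (hverts G) \<and>
     hedges G \<subseteq> hverts G \<times> hverts G \<and>
     (\<forall>F \<in> hhyper G. F \<subseteq> hverts G) \<and>
     (\<forall>v \<in> hverts G. {v} \<in> hhyper G) \<and>
     (\<forall>F \<in> hhyper G. \<forall>F'. F' \<subseteq> F \<longrightarrow> F' \<in> hhyper G)"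

definition is_walk :: "('a \<times> 'a) set \<Rightarrow> 'a list \<Rightarrow> bool" where
  "is_walk E xs \<longleftrightarrow> (\<forall>i. Suc i < length xs \<longrightarrow> (xs ! i, xs ! Suc i) \<in> E)"

definition path_via :: "('a \<times> 'a) set \<Rightarrow> 'a set \<Rightarrow> 'a \<Rightarrow> 'a \<Rightarrow> bool" where
  "path_via E U v1 v2 \<longleftrightarrow> (\<exists>us. set us \<subseteq> U \<and> is_walk E (v1 # us @ [v2]))"

definition path_from_in :: "('a \<times> 'a) set \<Rightarrow> 'a set \<Rightarrow> 'a \<Rightarrow> 'a \<Rightarrow> bool" where
  "path_from_in E U u v \<longleftrightarrow> (\<exists>us. set (u # us) \<subseteq> U \<and> is_walk E (u # us @ [v]))"

definition marg :: "'a hedg \<Rightarrow> 'a set \<Rightarrow> 'a hedg" where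
  "marg G U =
    (hverts G - U,
     {(v1, v2). v1 \<in> hverts G - U \<and> v2 \<in> hverts G - U \<and> path_via (hedges G) U v1 v2},
     {F'. F' \<subseteq> hverts G - U \<and>
          (\<exists>F \<in> hhyper G. F \<subseteq> F' \<union> U \<and>
             (\<forall>v \<in> F'. v \<in> F - U \<or>
                (\<exists>u \<in> F \<inter> U. path_from_in (hedges G) U u v)))})"

end

theory Submission
  imports Defs
begin

inductive pv :: "('a \<times> 'a) set \<Rightarrow> 'a set \<Rightarrow> 'a \<Rightarrow> 'a \<Rightarrow> bool" for E U where
  base: "(a, b) \<in> E \<Longrightarrow> pv E U a b"
| step: "(a, c) \<in> E \<Longrightarrow> c \<in> U \<Longrightarrow> pv E U c b \<Longrightarrow> pv E U a b"

lemma pv_mono: "pv E U a b \<Longrightarrow> U \<subseteq> W \<Longrightarrow> pv E W a b"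
  by (induction rule: pv.induct) (auto intro: pv.intros)

lemma pv_trans: "pv E U a c \<Longrightarrow> c \<in> U \<Longrightarrow> pv E U c b \<Longrightarrow> pv E U a b"
  by (induction rule: pv.induct) (auto intro: pv.intros)

lemma walk_Cons2: "is_walk E (x # y # xs) = ((x, y) \<in> E \<and> is_walk E (y # xs))"
  unfolding is_walk_def
proof safe
  fix i assume "\<forall>i. Suc i < length (x # y # xs) \<longrightarrow> ((x # y # xs) ! i, (x # y # xs) ! Suc i) \<in> E"
    and "Suc i < length (y # xs)"
  then show "((y # xs) ! i, (y # xs) ! Suc i) \<in> E"
    by (metis Suc_less_eq length_Cons nth_Cons_Suc)
next
  fix i assume a: "(x, y) \<in> E" and b: "\<forall>i. Suc i < length (y # xs) \<longrightarrow> ((y # xs) ! i, (y # xs) ! Suc i) \<in> E"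
    and c: "Suc i < length (x # y # xs)"
  show "((x # y # xs) ! i, (x # y # xs) ! Suc i) \<in> E"
  proof (cases i)
    case 0 then show ?thesis using a by simp
  next
    case (Suc j) then show ?thesis using b c by simp
  qed
qed auto

lemma walk_pv: "set us \<subseteq> U \<Longrightarrow> is_walk E (a # us @ [b]) \<Longrightarrow> pv E U a b"
proof (induction us arbitrary: a)
  case Nil then show ?case by (simp add: walk_Cons2 pv.base)
next
  case (Cons c us) then show ?case by (auto simp: walk_Cons2 intro: pv.step)
qed

lemma pv_walk: "pv E U a b \<Longrightarrow> \<exists>us. set us \<subseteq> U \<and> is_walk E (a # us @ [b])"
proof (induction rule: pv.induct)
  case (base a b)
  then show ?case by (intro exI[of _ "[]"]) (simp add: walk_Cons2 is_walk_def)
next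
  case (step a c b)
  then obtain us where "set us \<subseteq> U" "is_walk E (c # us @ [b])" by blast
  then show ?case using step by (intro exI[of _ "c # us"]) (simp add: walk_Cons2)
qed

lemma path_via_pv: "path_via E U a b = pv E U a b"
  unfolding path_via_def using walk_pv pv_walk by metis

lemma path_from_in_pv: "path_from_in E U u v = (u \<in> U \<and> pv E U u v)"
  unfolding path_from_in_def path_via_pv[symmetric] path_via_def by auto

definition ME :: "'a set \<Rightarrow> ('a \<times> 'a) set \<Rightarrow> 'a set \<Rightarrow> ('a \<times> 'a) set" where
  "ME V E U = {(v1, v2). v1 \<in> V - U \<and> v2 \<in> V - U \<and> pv E U v1 v2}"

lemma marg_alt: "marg G U = (hverts G - U, ME (hverts G) (hedges G) U,
   {F'. F' \<subseteq> hverts G - U \<and> (\<exists>F \<in> hhyper G. F \<subseteq> F' \<union> U \<and>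
      (\<forall>v \<in> F'. v \<in> F - U \<or> (\<exists>u \<in> F \<inter> U. pv (hedges G) U u v)))})"
proof -
  have e: "\<And>F U P. (\<exists>u \<in> F \<inter> U. u \<in> U \<and> P u) = (\<exists>u \<in> F \<inter> U. P u)" by blast
  have m: "\<And>V U E. {(v1, v2). v1 \<in> V - U \<and> v2 \<in> V - U \<and> path_via E U v1 v2} = ME V E U"
    unfolding ME_def path_via_pv by (rule refl)
  show ?thesis unfolding marg_def path_from_in_pv e m by (rule refl)
qed

lemma comp_to_direct: "pv (ME V E U1) U2 a b \<Longrightarrow> pv E (U1 \<union> U2) a b"
proof (induction rule: pv.induct)
  case (base a b)
  then have "pv E U1 a b" by (simp add: ME_def)
  then show ?case by (rule pv_mono) blast
next
  case (step a c b)
  then have "pv E U1 a c" by (simp add: ME_def)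
  then have 1: "pv E (U1 \<union> U2) a c" by (rule pv_mono) blast
  have 2: "c \<in> U1 \<union> U2" using step by blast
  show ?case using pv_trans[OF 1 2 step.IH] .
qed

lemma key:
  assumes "U2 \<subseteq> V" "U1 \<inter> U2 = {}"
  shows "pv E (U1 \<union> U2) a b \<Longrightarrow> b \<in> V - U1 \<Longrightarrow>
    pv E U1 a b \<or> (\<exists>c\<in>U2. pv E U1 a c \<and> pv (ME V E U1) U2 c b)"
proof (induction rule: pv.induct)
  case (base a b) then show ?case by (auto intro: pv.base)
next
  case (step a c b)
  show ?case
  proof (cases "c \<in> U1")
    case True
    then show ?thesis using step by (meson pv.step)
  next
    case False
    then have cU2: "c \<in> U2" using step by auto
    have cV: "c \<in> V - U1" using cU2 assms by auto
    have "pv (ME V E U1) U2 c b"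
      using step.IH[OF step.prems]
    proof
      assume "pv E U1 c b" then show ?thesis using cV step.prems by (auto simp: ME_def intro: pv.base)
    next
      assume "\<exists>c'\<in>U2. pv E U1 c c' \<and> pv (ME V E U1) U2 c' b"
      then obtain c' where "c' \<in> U2" "pv E U1 c c'" "pv (ME V E U1) U2 c' b" by blast
      moreover have "c' \<in> V - U1" using \<open>c' \<in> U2\<close> assms by auto
      ultimately show ?thesis using cV by (auto simp: ME_def intro: pv.step)
    qed
    then show ?thesis using cU2 step.hyps(1) by (auto intro: pv.base)
  qed
qed

lemma hv_simp: "hverts (a, b, c) = a" by (simp add: hverts_def)
lemma he_simp: "hedges (a, b, c) = b" by (simp add: hedges_def)
lemma hh_simp: "hhyper (a, b, c) = c" by (simp add: hhyper_def)

lemma marg_marg: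
  assumes hg: "is_hedg G" and u2: "U2 \<subseteq> hverts G" and dj: "U1 \<inter> U2 = {}"
  shows "marg (marg G U1) U2 = marg G (U1 \<union> U2)"
proof -
  define V where "V = hverts G"
  define E where "E = hedges G"
  define H where "H = hhyper G"
  have HV: "\<forall>F\<in>H. F \<subseteq> V" using hg unfolding is_hedg_def H_def V_def by auto
  have u2': "U2 \<subseteq> V" using u2 V_def by simp
  have L: "marg (marg G U1) U2 = (V - U1 - U2, ME (V - U1) (ME V E U1) U2,
     {F'. F' \<subseteq> V - U1 - U2 \<and> (\<exists>F1 \<in> {F'. F' \<subseteq> V - U1 \<and> (\<exists>F \<in> H. F \<subseteq> F' \<union> U1 \<and>
      (\<forall>v \<in> F'. v \<in> F - U1 \<or> (\<exists>u \<in> F \<inter> U1. pv E U1 u v)))}. F1 \<subseteq> F' \<union> U2 \<and>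
      (\<forall>v \<in> F'. v \<in> F1 - U2 \<or> (\<exists>u \<in> F1 \<inter> U2. pv (ME V E U1) U2 u v)))})"
  proof -
    have h1: "hverts (marg G U1) = V - U1" "hedges (marg G U1) = ME V E U1"
      "hhyper (marg G U1) = {F'. F' \<subseteq> V - U1 \<and> (\<exists>F \<in> H. F \<subseteq> F' \<union> U1 \<and>
      (\<forall>v \<in> F'. v \<in> F - U1 \<or> (\<exists>u \<in> F \<inter> U1. pv E U1 u v)))}"
      unfolding marg_alt hv_simp he_simp hh_simp V_def E_def H_def by (rule refl)+
    show ?thesis unfolding marg_alt[of "marg G U1" U2] h1 by (rule refl)
  qed
  have R: "marg G (U1 \<union> U2) = (V - (U1 \<union> U2), ME V E (U1 \<union> U2),
     {F'. F' \<subseteq> V - (U1 \<union> U2) \<and> (\<exists>F \<in> H. F \<subseteq> F' \<union> (U1 \<union> U2) \<and>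
      (\<forall>v \<in> F'. v \<in> F - (U1 \<union> U2) \<or> (\<exists>u \<in> F \<inter> (U1 \<union> U2). pv E (U1 \<union> U2) u v)))})"
    unfolding V_def E_def H_def by (rule marg_alt)
  have edges: "ME (V - U1) (ME V E U1) U2 = ME V E (U1 \<union> U2)"
  proof (rule set_eqI, clarify)
    fix a b
    show "((a, b) \<in> ME (V - U1) (ME V E U1) U2) = ((a, b) \<in> ME V E (U1 \<union> U2))"
    proof
      assume "(a, b) \<in> ME (V - U1) (ME V E U1) U2"
      then show "(a, b) \<in> ME V E (U1 \<union> U2)"
        using comp_to_direct[of V E U1 U2 a b] by (auto simp: ME_def[of "V - U1"] ME_def[of V E "U1 \<union> U2"])
    next
      assume a: "(a, b) \<in> ME V E (U1 \<union> U2)"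
      then have ab: "a \<in> V - U1 - U2" "b \<in> V - U1 - U2" "pv E (U1 \<union> U2) a b" unfolding ME_def by auto
      have "pv E U1 a b \<or> (\<exists>c\<in>U2. pv E U1 a c \<and> pv (ME V E U1) U2 c b)"
        using key[OF u2' dj ab(3)] ab by auto
      then have "pv (ME V E U1) U2 a b"
      proof
        assume "pv E U1 a b" then show ?thesis using ab by (auto simp: ME_def intro: pv.base)
      next
        assume "\<exists>c\<in>U2. pv E U1 a c \<and> pv (ME V E U1) U2 c b"
        then obtain c where "c \<in> U2" "pv E U1 a c" "pv (ME V E U1) U2 c b" by blast
        then show ?thesis using ab u2' dj by (auto simp: ME_def intro: pv.step)
      qed
      then show "(a, b) \<in> ME (V - U1) (ME V E U1) U2" using ab unfolding ME_def by auto
    qed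
  qed
  have hyp: "{F'. F' \<subseteq> V - U1 - U2 \<and> (\<exists>F1 \<in> {F'. F' \<subseteq> V - U1 \<and> (\<exists>F \<in> H. F \<subseteq> F' \<union> U1 \<and>
      (\<forall>v \<in> F'. v \<in> F - U1 \<or> (\<exists>u \<in> F \<inter> U1. pv E U1 u v)))}. F1 \<subseteq> F' \<union> U2 \<and>
      (\<forall>v \<in> F'. v \<in> F1 - U2 \<or> (\<exists>u \<in> F1 \<inter> U2. pv (ME V E U1) U2 u v)))}
    = {F'. F' \<subseteq> V - (U1 \<union> U2) \<and> (\<exists>F \<in> H. F \<subseteq> F' \<union> (U1 \<union> U2) \<and>
      (\<forall>v \<in> F'. v \<in> F - (U1 \<union> U2) \<or> (\<exists>u \<in> F \<inter> (U1 \<union> U2). pv E (U1 \<union> U2) u v)))}"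
  proof (rule set_eqI, rule iffI)
    fix F' assume "F' \<in> {F'. F' \<subseteq> V - U1 - U2 \<and> (\<exists>F1 \<in> {F'. F' \<subseteq> V - U1 \<and> (\<exists>F \<in> H. F \<subseteq> F' \<union> U1 \<and>
      (\<forall>v \<in> F'. v \<in> F - U1 \<or> (\<exists>u \<in> F \<inter> U1. pv E U1 u v)))}. F1 \<subseteq> F' \<union> U2 \<and>
      (\<forall>v \<in> F'. v \<in> F1 - U2 \<or> (\<exists>u \<in> F1 \<inter> U2. pv (ME V E U1) U2 u v)))}"
    then obtain F1 F where F': "F' \<subseteq> V - U1 - U2" and F1: "F1 \<subseteq> V - U1" "F \<in> H" "F \<subseteq> F1 \<union> U1"
      "\<forall>v \<in> F1. v \<in> F - U1 \<or> (\<exists>u \<in> F \<inter> U1. pv E U1 u v)"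
      and F1b: "F1 \<subseteq> F' \<union> U2" "\<forall>v \<in> F'. v \<in> F1 - U2 \<or> (\<exists>u \<in> F1 \<inter> U2. pv (ME V E U1) U2 u v)"
      by blast
    have allv: "\<forall>v \<in> F'. v \<in> F - (U1 \<union> U2) \<or> (\<exists>u \<in> F \<inter> (U1 \<union> U2). pv E (U1 \<union> U2) u v)"
    proof
      fix v assume v: "v \<in> F'"
      show "v \<in> F - (U1 \<union> U2) \<or> (\<exists>u \<in> F \<inter> (U1 \<union> U2). pv E (U1 \<union> U2) u v)"
      proof (cases "v \<in> F1 - U2")
        case True
        then have "v \<in> F - U1 \<or> (\<exists>u \<in> F \<inter> U1. pv E U1 u v)" using F1(4) by blast
        then show ?thesis
        proof
          assume "v \<in> F - U1" then show ?thesis using v F' by blast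
        next
          assume "\<exists>u \<in> F \<inter> U1. pv E U1 u v"
          then obtain u where u: "u \<in> F \<inter> U1" "pv E U1 u v" by blast
          have "pv E (U1 \<union> U2) u v" using u(2) by (rule pv_mono) blast
          then show ?thesis using u(1) by blast
        qed
      next
        case False
        then obtain u where u: "u \<in> F1" "u \<in> U2" "pv (ME V E U1) U2 u v" using F1b v by blast
        have p: "pv E (U1 \<union> U2) u v" using comp_to_direct[OF u(3)] .
        have "u \<in> F - U1 \<or> (\<exists>u' \<in> F \<inter> U1. pv E U1 u' u)" using F1(4) u(1) by blast
        then show ?thesis
        proof
          assume "u \<in> F - U1" then show ?thesis using u p by blast
        next
          assume "\<exists>u' \<in> F \<inter> U1. pv E U1 u' u"
          then obtain u' where u': "u' \<in> F \<inter> U1" "pv E U1 u' u" by blast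
          have q: "pv E (U1 \<union> U2) u' u" using u'(2) by (rule pv_mono) blast
          have uu: "u \<in> U1 \<union> U2" using u(2) by blast
          have "pv E (U1 \<union> U2) u' v" using pv_trans[OF q uu p] .
          then show ?thesis using u'(1) by blast
        qed
      qed
    qed
    show "F' \<in> {F'. F' \<subseteq> V - (U1 \<union> U2) \<and> (\<exists>F \<in> H. F \<subseteq> F' \<union> (U1 \<union> U2) \<and>
      (\<forall>v \<in> F'. v \<in> F - (U1 \<union> U2) \<or> (\<exists>u \<in> F \<inter> (U1 \<union> U2). pv E (U1 \<union> U2) u v)))}"
    proof (rule CollectI, intro conjI)
      show "F' \<subseteq> V - (U1 \<union> U2)" using F' by blast
      have "F \<subseteq> F' \<union> (U1 \<union> U2)" using F1(3) F1b(1) by blast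
      then show "\<exists>F \<in> H. F \<subseteq> F' \<union> (U1 \<union> U2) \<and>
      (\<forall>v \<in> F'. v \<in> F - (U1 \<union> U2) \<or> (\<exists>u \<in> F \<inter> (U1 \<union> U2). pv E (U1 \<union> U2) u v))"
        using F1(2) allv by blast
    qed
  next
    fix F' assume "F' \<in> {F'. F' \<subseteq> V - (U1 \<union> U2) \<and> (\<exists>F \<in> H. F \<subseteq> F' \<union> (U1 \<union> U2) \<and>
      (\<forall>v \<in> F'. v \<in> F - (U1 \<union> U2) \<or> (\<exists>u \<in> F \<inter> (U1 \<union> U2). pv E (U1 \<union> U2) u v)))}"
    then obtain F where F': "F' \<subseteq> V - (U1 \<union> U2)" and F: "F \<in> H" "F \<subseteq> F' \<union> (U1 \<union> U2)"
      "\<forall>v \<in> F'. v \<in> F - (U1 \<union> U2) \<or> (\<exists>u \<in> F \<inter> (U1 \<union> U2). pv E (U1 \<union> U2) u v)" by blast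
    have FV: "F \<subseteq> V" using HV F by auto
    define F1 where "F1 = {x. x \<in> F' \<union> U2 \<and> x \<in> V \<and> (x \<in> F - U1 \<or> (\<exists>u \<in> F \<inter> U1. pv E U1 u x))}"
    have F1a: "F1 \<subseteq> V - U1" using F' dj unfolding F1_def by auto
    have F1b: "F \<subseteq> F1 \<union> U1" using F FV unfolding F1_def by auto
    have F1c: "\<forall>v \<in> F1. v \<in> F - U1 \<or> (\<exists>u \<in> F \<inter> U1. pv E U1 u v)" unfolding F1_def by auto
    have F1d: "F1 \<subseteq> F' \<union> U2" unfolding F1_def by auto
    have F1e: "\<forall>v \<in> F'. v \<in> F1 - U2 \<or> (\<exists>u \<in> F1 \<inter> U2. pv (ME V E U1) U2 u v)"
    proof
      fix v assume v: "v \<in> F'"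
      have vV: "v \<in> V - U1" "v \<notin> U2" using v F' by auto
      have "v \<in> F - (U1 \<union> U2) \<or> (\<exists>u \<in> F \<inter> (U1 \<union> U2). pv E (U1 \<union> U2) u v)"
        using F(3) v by blast
      then show "v \<in> F1 - U2 \<or> (\<exists>u \<in> F1 \<inter> U2. pv (ME V E U1) U2 u v)"
      proof
        assume "v \<in> F - (U1 \<union> U2)" then show ?thesis using v vV unfolding F1_def by auto
      next
        assume "\<exists>u \<in> F \<inter> (U1 \<union> U2). pv E (U1 \<union> U2) u v"
        then obtain u where u: "u \<in> F" "u \<in> U1 \<union> U2" "pv E (U1 \<union> U2) u v" by blast
        have K: "pv E U1 u v \<or> (\<exists>c\<in>U2. pv E U1 u c \<and> pv (ME V E U1) U2 c v)"
          using key[OF u2' dj u(3)] vV by auto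
        show ?thesis
        proof (cases "u \<in> U1")
          case True
          show ?thesis using K
          proof
            assume "pv E U1 u v" then show ?thesis using u True v vV unfolding F1_def by auto
          next
            assume "\<exists>c\<in>U2. pv E U1 u c \<and> pv (ME V E U1) U2 c v"
            then obtain c where "c \<in> U2" "pv E U1 u c" "pv (ME V E U1) U2 c v" by blast
            moreover have "c \<in> F1" unfolding F1_def using \<open>c \<in> U2\<close> u2' u True \<open>pv E U1 u c\<close> by auto
            ultimately show ?thesis by blast
          qed
        next
          case False
          then have uU2: "u \<in> U2" using u by auto
          have uF1: "u \<in> F1" unfolding F1_def using uU2 u2' u False by auto
          have uV: "u \<in> V - U1" using uU2 u2' dj by auto
          have "pv (ME V E U1) U2 u v" using K
          proof
            assume "pv E U1 u v" then show ?thesis using uV vV by (auto simp: ME_def intro: pv.base)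
          next
            assume "\<exists>c\<in>U2. pv E U1 u c \<and> pv (ME V E U1) U2 c v"
            then obtain c where "c \<in> U2" "pv E U1 u c" "pv (ME V E U1) U2 c v" by blast
            moreover have "c \<in> V - U1" using \<open>c \<in> U2\<close> u2' dj by auto
            ultimately show ?thesis using uV by (auto simp: ME_def intro: pv.step)
          qed
          then show ?thesis using uF1 uU2 by blast
        qed
      qed
    qed
    show "F' \<in> {F'. F' \<subseteq> V - U1 - U2 \<and> (\<exists>F1 \<in> {F'. F' \<subseteq> V - U1 \<and> (\<exists>F \<in> H. F \<subseteq> F' \<union> U1 \<and>
      (\<forall>v \<in> F'. v \<in> F - U1 \<or> (\<exists>u \<in> F \<inter> U1. pv E U1 u v)))}. F1 \<subseteq> F' \<union> U2 \<and>
      (\<forall>v \<in> F'. v \<in> F1 - U2 \<or> (\<exists>u \<in> F1 \<inter> U2. pv (ME V E U1) U2 u v)))}"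
    proof (rule CollectI, intro conjI)
      show "F' \<subseteq> V - U1 - U2" using F' by blast
      have "F1 \<in> {F'. F' \<subseteq> V - U1 \<and> (\<exists>F \<in> H. F \<subseteq> F' \<union> U1 \<and>
      (\<forall>v \<in> F'. v \<in> F - U1 \<or> (\<exists>u \<in> F \<inter> U1. pv E U1 u v)))}"
        using F1a F1b F1c F(1) by blast
      then show "\<exists>F1 \<in> {F'. F' \<subseteq> V - U1 \<and> (\<exists>F \<in> H. F \<subseteq> F' \<union> U1 \<and>
      (\<forall>v \<in> F'. v \<in> F - U1 \<or> (\<exists>u \<in> F \<inter> U1. pv E U1 u v)))}. F1 \<subseteq> F' \<union> U2 \<and>
      (\<forall>v \<in> F'. v \<in> F1 - U2 \<or> (\<exists>u \<in> F1 \<inter> U2. pv (ME V E U1) U2 u v))"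
        using F1d F1e by blast
    qed
  qed
  have vx: "V - U1 - U2 = V - (U1 \<union> U2)" by blast
  show ?thesis unfolding L R edges hyp by (simp only: vx)
qed

theorem mainTheorem17:
  fixes G :: "'a hedg" and U1 U2 :: "'a set"
  assumes "is_hedg G"
    and "U1 \<subseteq> hverts G" and "U2 \<subseteq> hverts G"
    and "U1 \<inter> U2 = {}"
  shows "marg (marg G U1) U2 = marg G (U1 \<union> U2)
       \<and> marg G (U1 \<union> U2) = marg (marg G U2) U1"
proof -
  have a: "marg (marg G U1) U2 = marg G (U1 \<union> U2)" by (rule marg_marg[OF assms(1) assms(3) assms(4)])
  have d: "U2 \<inter> U1 = {}" using assms(4) by blast
  have b: "marg (marg G U2) U1 = marg G (U2 \<union> U1)" by (rule marg_marg[OF assms(1) assms(2) d])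
  have c: "U2 \<union> U1 = U1 \<union> U2" by blast
  show ?thesis using a b unfolding c by simp
qed

end
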